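(* Fix $\bar x\ge0$ and let $Y=(Y_t)_{t\ge0}$ be a measurable real-valued path with $Y_0\le\bar x$ such that $\overline Y$ (its running supremum with initial maximum level $\bar x$) is continuous. Let $H=(H_t)_{t\ge0}$ be a measurable path with $H_t\le1$ for all $t\ge0$ (and such that the integrals below are well defined). Define $U_t=Y_t-\int_{0^+}^tH_s\,\mathrm d\overline Y_s$. Then the running supremum of $U$ with initial maximum level $\bar x$ satisfies $$\overline U_t=\overline Y_t-\int_{0^+}^tH_s\,\mathrm d\overline Y_s,\qquad t\ge0.$$
   Context: For a path $Y$ and $\bar x\ge Y_0$, $\overline Y_t:=\bar x\vee\sup_{0\le s\le t}Y_s$. $\int_{0^+}^t$ denotes the Stieltjes integral over $(0,t]$. *)

theory Defs
  imports "HOL-Analysis.Analysis"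
begin

text \<open>Running supremum of a path Y on [0,\<infinity>) with initial maximum level xbar:
  running_max xbar Y t = xbar \<squnion> sup_{0 \<le> s \<le> t} Y s  (for t \<ge> 0).
  For t < 0 it is extended constantly by its value at 0 (only so that it is a
  function on the whole real line, as required by the Lebesgue-Stieltjes
  measure below; it plays no role for t \<ge> 0).\<close>
definition running_max :: "real \<Rightarrow> (real \<Rightarrow> real) \<Rightarrow> real \<Rightarrow> real" where
  "running_max xbar Y t = max xbar (Sup (Y ` {0..max 0 t}))"

definition stieltjes_int :: "(real \<Rightarrow> real) \<Rightarrow> (real \<Rightarrow> real) \<Rightarrow> real \<Rightarrow> real" where
  "stieltjes_int F H t = (LINT s:{0<..t}|interval_measure F. H s)"

end

theory Submission
  imports Defs
begin

lemma tail_small: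
  fixes g :: "real \<Rightarrow> real" and N :: "real measure"
  assumes gi: "integrable N g" and e: "e > 0"
  shows "\<exists>n::nat. integral\<^sup>L N (\<lambda>x. max 0 (\<bar>g x\<bar> - real n)) < e"
proof -
  have gm: "g \<in> borel_measurable N" using gi by auto
  have "(\<lambda>n. integral\<^sup>L N (\<lambda>x. max 0 (\<bar>g x\<bar> - real n))) \<longlonglongrightarrow> integral\<^sup>L N (\<lambda>x. 0::real)"
  proof (rule integral_dominated_convergence[where w="\<lambda>x. \<bar>g x\<bar>"])
    show "(\<lambda>x. 0::real) \<in> borel_measurable N" by simp
    show "\<And>i. (\<lambda>x. max 0 (\<bar>g x\<bar> - real i)) \<in> borel_measurable N" using gm by measurable
    show "integrable N (\<lambda>x. \<bar>g x\<bar>)" using gi by auto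
    show "AE x in N. (\<lambda>i. max 0 (\<bar>g x\<bar> - real i)) \<longlonglongrightarrow> 0"
    proof (rule AE_I2)
      fix x
      obtain k :: nat where k: "\<bar>g x\<bar> \<le> real k" using real_arch_simple by blast
      have "\<forall>\<^sub>F i in sequentially. max 0 (\<bar>g x\<bar> - real i) = 0"
        unfolding eventually_sequentially
        by (rule exI[of _ k]) (use k in auto)
      then show "(\<lambda>i. max 0 (\<bar>g x\<bar> - real i)) \<longlonglongrightarrow> 0" by (rule tendsto_eventually)
    qed
    show "\<And>i. AE x in N. norm (max 0 (\<bar>g x\<bar> - real i)) \<le> \<bar>g x\<bar>" by auto
  qed
  then have "(\<lambda>n. integral\<^sup>L N (\<lambda>x. max 0 (\<bar>g x\<bar> - real n))) \<longlonglongrightarrow> 0" by simp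
  from order_tendstoD(2)[OF this e] show ?thesis
    by (auto simp: eventually_sequentially)
qed

theorem lemma3p1:
  fixes xbar :: real and Y H :: "real \<Rightarrow> real"
  assumes xbar_nonneg: "0 \<le> xbar"
    and Y_meas: "Y \<in> borel_measurable borel"
    and Y0: "Y 0 \<le> xbar"
    and Y_bdd: "\<And>t. 0 \<le> t \<Longrightarrow> bdd_above (Y ` {0..t})"
    and Ybar_cont: "continuous_on {0..} (running_max xbar Y)"
    and H_meas: "H \<in> borel_measurable borel"
    and H_le1: "\<And>t. 0 \<le> t \<Longrightarrow> H t \<le> 1"
    and H_int: "\<And>t. 0 \<le> t \<Longrightarrow>
                   set_integrable (interval_measure (running_max xbar Y)) {0<..t} H"
  shows "\<forall>t\<ge>0. running_max xbar (\<lambda>s. Y s - stieltjes_int (running_max xbar Y) H s) t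
                 = running_max xbar Y t - stieltjes_int (running_max xbar Y) H t"
proof -
  define M where "M = running_max xbar Y"
  define mu where "mu = interval_measure M"
  define I where "I = stieltjes_int M H"
  have Mdef: "\<And>t. M t = max xbar (Sup (Y ` {0..max 0 t}))"
    by (simp add: M_def running_max_def)
  have Mle: "\<And>r. 0 \<le> r \<Longrightarrow> Y r \<le> M r"
  proof -
    fix r :: real assume r: "0 \<le> r"
    have "Y r \<le> Sup (Y ` {0..r})" using Y_bdd[OF r] r by (intro cSup_upper) auto
    then show "Y r \<le> M r" using r by (simp add: Mdef)
  qed
  have M0: "M 0 = xbar" using Y0 by (simp add: Mdef)
  have Mneg: "\<And>t. t \<le> 0 \<Longrightarrow> M t = xbar" using Y0 by (simp add: Mdef)
  have mono: "\<And>x y. x \<le> y \<Longrightarrow> M x \<le> M y"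
  proof -
    fix x y :: real assume xy: "x \<le> y"
    have "Sup (Y ` {0..max 0 x}) \<le> Sup (Y ` {0..max 0 y})"
      using xy by (intro cSup_subset_mono Y_bdd) auto
    then show "M x \<le> M y" by (simp add: Mdef)
  qed
  have rc: "\<And>a. continuous (at_right a) M"
  proof -
    fix a :: real
    show "continuous (at_right a) M"
    proof (cases "a < 0")
      case True
      have "\<forall>\<^sub>F x in at_right a. M x = M a"
        using eventually_at_right_real[OF True] Mneg True
        by (auto elim!: eventually_mono)
      then have "(M \<longlongrightarrow> M a) (at_right a)" by (rule tendsto_eventually)
      then show ?thesis by (simp add: continuous_within)
    next
      case False
      have "continuous (at a within {0..}) M"
        using Ybar_cont False by (simp add: M_def continuous_on_eq_continuous_within)
      then show ?thesis
        by (rule continuous_within_subset) (use False in auto)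
    qed
  qed
  have meas_Ioc: "\<And>a b. a \<le> b \<Longrightarrow> measure mu {a<..b} = M b - M a"
    unfolding mu_def by (rule measure_interval_measure_Ioc) (auto intro: mono rc)
  have emeas_Ioc: "\<And>a b. emeasure mu {a<..b} < \<infinity>"
    unfolding mu_def by (subst emeasure_interval_measure_Ioc_eq) (auto intro: mono rc)
  have ind_int: "\<And>a b. integrable mu (indicator {a<..b} :: real \<Rightarrow> real)"
    using emeas_Ioc by (auto simp: mu_def)
  have ind_integral: "\<And>a b. a \<le> b \<Longrightarrow> integral\<^sup>L mu (indicator {a<..b} :: real \<Rightarrow> real) = M b - M a"
    using meas_Ioc by (simp add: mu_def)
  have Hint: "\<And>t. 0 \<le> t \<Longrightarrow> integrable mu (\<lambda>x. indicator {0<..t} x * H x)"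
    using H_int by (simp add: mu_def M_def set_integrable_def)
  have Idef: "\<And>t. I t = integral\<^sup>L mu (\<lambda>x. indicator {0<..t} x * H x)"
    by (simp add: I_def stieltjes_int_def mu_def set_lebesgue_integral_def)
  have I0: "I 0 = 0" by (simp add: Idef)
  have Idiff: "\<And>r t. 0 \<le> r \<Longrightarrow> r \<le> t \<Longrightarrow>
      integrable mu (\<lambda>x. indicator {r<..t} x * H x) \<and>
      I t - I r = integral\<^sup>L mu (\<lambda>x. indicator {r<..t} x * H x)"
  proof -
    fix r t :: real assume r: "0 \<le> r" and rt: "r \<le> t"
    have eq: "(\<lambda>x. indicator {r<..t} x * H x) =
        (\<lambda>x. indicator {0<..t} x * H x - indicator {0<..r} x * H x)"
      using r rt by (auto simp: fun_eq_iff indicator_def)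
    have i1: "integrable mu (\<lambda>x. indicator {0<..t} x * H x)" using Hint r rt by auto
    have i2: "integrable mu (\<lambda>x. indicator {0<..r} x * H x)" using Hint r by auto
    show "integrable mu (\<lambda>x. indicator {r<..t} x * H x) \<and>
      I t - I r = integral\<^sup>L mu (\<lambda>x. indicator {r<..t} x * H x)"
      unfolding eq Idef using i1 i2 by (simp add: integral_diff)
  qed
  have Imono: "\<And>r t. 0 \<le> r \<Longrightarrow> r \<le> t \<Longrightarrow> I t - I r \<le> M t - M r"
  proof -
    fix r t :: real assume r: "0 \<le> r" and rt: "r \<le> t"
    have "I t - I r = integral\<^sup>L mu (\<lambda>x. indicator {r<..t} x * H x)" using Idiff r rt by blast
    also have "\<dots> \<le> integral\<^sup>L mu (indicator {r<..t})"
      using Idiff[OF r rt] ind_int r H_le1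
      by (intro integral_mono) (auto simp: indicator_def)
    also have "\<dots> = M t - M r" using ind_integral rt by blast
    finally show "I t - I r \<le> M t - M r" .
  qed
  have AC: "\<And>t e. 0 \<le> t \<Longrightarrow> e > 0 \<Longrightarrow> \<exists>d>0. \<forall>r. 0 \<le> r \<and> r \<le> t \<and> M t - M r < d \<longrightarrow> \<bar>I t - I r\<bar> < e"
  proof -
    fix t e :: real assume t: "0 \<le> t" and e: "e > 0"
    define g where "g = (\<lambda>x. indicator {0<..t} x * H x)"
    have gi: "integrable mu g" using Hint t by (simp add: g_def)
    obtain n :: nat where n: "integral\<^sup>L mu (\<lambda>x. max 0 (\<bar>g x\<bar> - real n)) < e / 2"
      using tail_small[OF gi, of "e/2"] e by auto
    have ti: "integrable mu (\<lambda>x. max 0 (\<bar>g x\<bar> - real n))"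
    proof (rule Bochner_Integration.integrable_bound[OF gi])
      have gm: "g \<in> borel_measurable mu" using gi by auto
      show "(\<lambda>x. max 0 (\<bar>g x\<bar> - real n)) \<in> borel_measurable mu" using gm by measurable
      show "AE x in mu. norm (max 0 (\<bar>g x\<bar> - real n)) \<le> norm (g x)" by auto
    qed
    define d where "d = e / (2 * (real n + 1))"
    have d: "d > 0" using e by (simp add: d_def)
    show "\<exists>d>0. \<forall>r. 0 \<le> r \<and> r \<le> t \<and> M t - M r < d \<longrightarrow> \<bar>I t - I r\<bar> < e"
    proof (intro exI[of _ d] conjI allI impI d)
      fix r assume h: "0 \<le> r \<and> r \<le> t \<and> M t - M r < d"
      then have r: "0 \<le> r" "r \<le> t" "M t - M r < d" by auto
      have ii: "integrable mu (\<lambda>x. indicator {r<..t} x * H x)" using Idiff r by blast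
      have "\<bar>I t - I r\<bar> = norm (integral\<^sup>L mu (\<lambda>x. indicator {r<..t} x * H x))"
        using Idiff[OF r(1,2)] by simp
      also have "\<dots> \<le> integral\<^sup>L mu (\<lambda>x. real n * indicator {r<..t} x + max 0 (\<bar>g x\<bar> - real n))"
      proof (rule Bochner_Integration.integral_norm_bound_integral)
        show "integrable mu (\<lambda>x. indicator {r<..t} x * H x)" by (rule ii)
        show "integrable mu (\<lambda>x. real n * indicator {r<..t} x + max 0 (\<bar>g x\<bar> - real n))"
          using ind_int ti by auto
        fix x
        show "norm (indicator {r<..t} x * H x) \<le> real n * indicator {r<..t} x + max 0 (\<bar>g x\<bar> - real n)"
          using r by (auto simp: g_def indicator_def)
      qed
      also have "\<dots> = real n * (M t - M r) + integral\<^sup>L mu (\<lambda>x. max 0 (\<bar>g x\<bar> - real n))"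
        using ind_int ti ind_integral[OF r(2)] by simp
      also have "\<dots> < e"
      proof -
        have "M t - M r \<ge> 0" using mono r by auto
        then have "real n * (M t - M r) \<le> real n * d" using r by (intro mult_left_mono) auto
        also have "\<dots> \<le> e / 2" using e by (simp add: d_def field_simps)
        finally show ?thesis using n by linarith
      qed
      finally show "\<bar>I t - I r\<bar> < e" .
    qed
  qed
  show ?thesis
  proof (intro allI impI)
    fix t :: real assume t: "0 \<le> t"
    define U where "U = (\<lambda>s. Y s - I s)"
    have D_mono: "\<And>r. 0 \<le> r \<Longrightarrow> r \<le> t \<Longrightarrow> M r - I r \<le> M t - I t"
      using Imono by fastforce
    have Ule: "\<And>r. r \<in> {0..t} \<Longrightarrow> U r \<le> M t - I t"
      using D_mono Mle unfolding U_def by fastforce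
    have bdd: "bdd_above (U ` {0..t})" using Ule by (intro bdd_aboveI[of _ "M t - I t"]) auto
    have LHS: "running_max xbar U t = max xbar (Sup (U ` {0..t}))"
      using t by (simp add: running_max_def)
    have Ult: "\<And>r. r \<in> {0..t} \<Longrightarrow> U r \<le> Sup (U ` {0..t})"
      using bdd by (intro cSup_upper) auto
    have up: "running_max xbar U t \<le> M t - I t"
    proof -
      have "Sup (U ` {0..t}) \<le> M t - I t" using Ule t by (intro cSup_least) auto
      moreover have "xbar \<le> M t - I t" using D_mono[of 0] t M0 I0 by simp
      ultimately show ?thesis using LHS by simp
    qed
    have low: "M t - I t \<le> running_max xbar U t"
    proof (rule field_le_epsilon)
      fix e :: real assume e: "0 < e"
      obtain d where d: "d > 0" and dd: "\<And>r. 0 \<le> r \<Longrightarrow> r \<le> t \<Longrightarrow> M t - M r < d \<Longrightarrow> \<bar>I t - I r\<bar> < e / 2"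
        using AC[OF t, of "e/2"] e by auto
      show "M t - I t \<le> running_max xbar U t + e"
      proof (cases "M t = xbar")
        case True
        have "\<bar>I t - I 0\<bar> < e / 2" using dd[of 0] t d True M0 by simp
        then show ?thesis using True I0 LHS by simp
      next
        case False
        then have Mt: "M t = Sup (Y ` {0..t})" using t by (simp add: Mdef max_def split: if_splits)
        have "M t - min (e/2) d < Sup (Y ` {0..t})" using Mt e d by simp
        then obtain r where r: "r \<in> {0..t}" and Yr: "M t - min (e/2) d < Y r"
          by (subst (asm) less_cSup_iff) (use Y_bdd[OF t] t in auto)
        have "M t - M r < d" using Yr Mle[of r] r by auto
        then have "\<bar>I t - I r\<bar> < e / 2" using dd r by auto
        then have "M t - I t \<le> U r + e" using Yr unfolding U_def by linarith
        also have "U r \<le> running_max xbar U t" using Ult[OF r] LHS by simp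
        finally show ?thesis by simp
      qed
    qed
    show "running_max xbar (\<lambda>s. Y s - stieltjes_int (running_max xbar Y) H s) t
                 = running_max xbar Y t - stieltjes_int (running_max xbar Y) H t"
      using up low by (simp add: U_def I_def M_def)
  qed
qed

end
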